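(* Let $\phi:R\to S$ be a cyclically pure ring map. If $S$ has strong avoidance, then $R$ has strong avoidance. In particular this holds whenever $\phi$ is a pure morphism.
   Context: All rings are commutative with $1\neq 0$. A ring map $\phi:R\to S$ is cyclically pure if for every ideal $I$ of $R$ the induced map $R/I\to S/IS$ is injective; it is pure if $M\to M\otimes_R S$, $x\mapsto x\otimes1$, is injective for every $R$-module $M$. A ring map $\psi:A\to B$ has avoidance if whenever $I,I_1,\ldots,I_n$ are ideals of $A$ with $I\subseteq\bigcup_{k=1}^n I_k$, then $IB\subseteq I_kB$ for some $k$. A ring $B$ has strong avoidance if every ring map $A\to B$ has avoidance. *)

theory Defs
  imports "HOL-Algebra.QuotRing"
begin

definition nz_cring :: "('a, 'm) ring_scheme \<Rightarrow> bool" where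
  "nz_cring R \<longleftrightarrow> cring R \<and> \<one>\<^bsub>R\<^esub> \<noteq> \<zero>\<^bsub>R\<^esub>"

definition ext_ideal :: "('a, 'm) ring_scheme \<Rightarrow> ('b, 'n) ring_scheme \<Rightarrow> ('a \<Rightarrow> 'b) \<Rightarrow> 'a set \<Rightarrow> 'b set" where
  "ext_ideal R S phi I = Idl\<^bsub>S\<^esub> (phi ` I)"

text \<open>Cyclic purity: for every ideal I of R the induced map R/I \<rightarrow> S/IS,
  I +> x \<mapsto> IS +> phi x, is injective.\<close>
definition cyclically_pure :: "('a, 'm) ring_scheme \<Rightarrow> ('b, 'n) ring_scheme \<Rightarrow> ('a \<Rightarrow> 'b) \<Rightarrow> bool" where
  "cyclically_pure R S phi \<longleftrightarrow>
     phi \<in> ring_hom R S \<and>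
     (\<forall>I. ideal I R \<longrightarrow>
        (\<forall>x \<in> carrier R. \<forall>y \<in> carrier R.
           ext_ideal R S phi I +>\<^bsub>S\<^esub> phi x = ext_ideal R S phi I +>\<^bsub>S\<^esub> phi y
           \<longrightarrow> I +>\<^bsub>R\<^esub> x = I +>\<^bsub>R\<^esub> y))"

definition has_avoidance :: "('a, 'm) ring_scheme \<Rightarrow> ('b, 'n) ring_scheme \<Rightarrow> ('a \<Rightarrow> 'b) \<Rightarrow> bool" where
  "has_avoidance A B psi \<longleftrightarrow>
     (\<forall>I (Is :: nat \<Rightarrow> 'a set) (n :: nat).
        ideal I A \<longrightarrow> (\<forall>k \<in> {1..n}. ideal (Is k) A) \<longrightarrow>
        I \<subseteq> (\<Union>k \<in> {1..n}. Is k) \<longrightarrow>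
        (\<exists>k \<in> {1..n}. ext_ideal A B psi I \<subseteq> ext_ideal A B psi (Is k)))"

text \<open>Leaving 'c free in a theorem quantifies over all source types.\<close>
definition strong_avoidance :: "'c itself \<Rightarrow> ('b, 'n) ring_scheme \<Rightarrow> bool" where
  "strong_avoidance (_ :: 'c itself) B \<longleftrightarrow>
     (\<forall>(A :: 'c ring) psi. nz_cring A \<longrightarrow> psi \<in> ring_hom A B \<longrightarrow> has_avoidance A B psi)"

end

theory Submission
  imports Defs
begin

theorem lemma4p6:
  fixes R :: "'a ring" and S :: "'b ring" and phi :: "'a \<Rightarrow> 'b"
  assumes "nz_cring R" and "nz_cring S"
    and "cyclically_pure R S phi"
    and "strong_avoidance TYPE('c) S"
  shows "strong_avoidance TYPE('c) R"
  unfolding strong_avoidance_def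
proof (intro allI impI)
  fix A :: "'c ring" and psi
  assume A: "nz_cring A" and psi: "psi \<in> ring_hom A R"
  interpret R: cring R using assms(1) by (simp add: nz_cring_def)
  interpret S: cring S using assms(2) by (simp add: nz_cring_def)
  interpret A: cring A using A by (simp add: nz_cring_def)
  have phi: "phi \<in> ring_hom R S" and cp: "\<And>I x y. ideal I R \<Longrightarrow> x \<in> carrier R \<Longrightarrow> y \<in> carrier R \<Longrightarrow>
           ext_ideal R S phi I +>\<^bsub>S\<^esub> phi x = ext_ideal R S phi I +>\<^bsub>S\<^esub> phi y
           \<Longrightarrow> I +>\<^bsub>R\<^esub> x = I +>\<^bsub>R\<^esub> y"
    using assms(3) unfolding cyclically_pure_def by blast+
  have comp: "phi \<circ> psi \<in> ring_hom A S" using ring_hom_trans[OF psi phi] .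
  have av: "has_avoidance A S (phi \<circ> psi)"
    using assms(4) A comp unfolding strong_avoidance_def by blast
  show "has_avoidance A R psi"
    unfolding has_avoidance_def
  proof (intro allI impI)
    fix I Is and n :: nat
    assume I: "ideal I A" and Is: "\<forall>k\<in>{1..n}. ideal (Is k) A"
      and sub: "I \<subseteq> (\<Union>k\<in>{1..n}. Is k)"
    have "\<exists>k\<in>{1..n}. ext_ideal A S (phi \<circ> psi) I \<subseteq> ext_ideal A S (phi \<circ> psi) (Is k)"
      using av I Is sub unfolding has_avoidance_def by (elim allE[of _ I] allE[of _ Is] allE[of _ n]) (elim impE, assumption+)
    then obtain k where k: "k \<in> {1..n}"
      and kk: "Idl\<^bsub>S\<^esub> ((phi \<circ> psi) ` I) \<subseteq> Idl\<^bsub>S\<^esub> ((phi \<circ> psi) ` Is k)"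
      unfolding ext_ideal_def by blast
    have Iscar: "Is k \<subseteq> carrier A" using Is k additive_subgroup.a_subset[OF ideal.axioms(1)] by blast
    have Icar: "I \<subseteq> carrier A" using additive_subgroup.a_subset[OF ideal.axioms(1)[OF I]] .
    define J where "J = Idl\<^bsub>R\<^esub> (psi ` Is k)"
    have psiIs: "psi ` Is k \<subseteq> carrier R" using Iscar ring_hom_closed[OF psi] by blast
    have psiI: "psi ` I \<subseteq> carrier R" using Icar ring_hom_closed[OF psi] by blast
    have J: "ideal J R" unfolding J_def using R.genideal_ideal[OF psiIs] .
    have Jsub: "psi ` Is k \<subseteq> J" unfolding J_def using R.genideal_self[OF psiIs] .
    have Jcar: "J \<subseteq> carrier R" using additive_subgroup.a_subset[OF ideal.axioms(1)[OF J]] .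
    have phiJ: "phi ` J \<subseteq> carrier S" using Jcar ring_hom_closed[OF phi] by blast
    let ?E = "ext_ideal R S phi J"
    have E: "ideal ?E S" unfolding ext_ideal_def using S.genideal_ideal[OF phiJ] .
    have "(phi \<circ> psi) ` Is k \<subseteq> phi ` J" using Jsub by auto
    also have "\<dots> \<subseteq> ?E" unfolding ext_ideal_def using S.genideal_self[OF phiJ] .
    finally have "Idl\<^bsub>S\<^esub> ((phi \<circ> psi) ` Is k) \<subseteq> ?E" using S.genideal_minimal[OF E] by blast
    with kk have key: "Idl\<^bsub>S\<^esub> ((phi \<circ> psi) ` I) \<subseteq> ?E" by blast
    have phipsiI: "(phi \<circ> psi) ` I \<subseteq> carrier S" proof (rule image_subsetI)
      fix x assume "x \<in> I"
      then have "psi x \<in> carrier R" using psiI by blast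
      then show "(phi \<circ> psi) x \<in> carrier S" using ring_hom_closed[OF phi] by simp
    qed
    have "psi ` I \<subseteq> J"
    proof
      fix x assume x: "x \<in> psi ` I"
      then have xc: "x \<in> carrier R" using psiI by blast
      have "phi x \<in> (phi \<circ> psi) ` I" using x by auto
      then have "phi x \<in> ?E" using key S.genideal_self[OF phipsiI] by blast
      then have "?E +>\<^bsub>S\<^esub> phi x = ?E +>\<^bsub>S\<^esub> phi \<zero>\<^bsub>R\<^esub>"
        using S.a_rcos_zero[OF E] ring_hom_zero[OF phi R.ring_axioms S.ring_axioms]
          additive_subgroup.zero_closed[OF ideal.axioms(1)[OF E]] by simp
      then have "J +>\<^bsub>R\<^esub> x = J +>\<^bsub>R\<^esub> \<zero>\<^bsub>R\<^esub>" using cp[OF J xc R.zero_closed] by blast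
      also have "\<dots> = J" using R.a_rcos_zero[OF J] additive_subgroup.zero_closed[OF ideal.axioms(1)[OF J]] by simp
      finally show "x \<in> J" using ideal.rcos_const_imp_mem[OF J xc] by blast
    qed
    then have "Idl\<^bsub>R\<^esub> (psi ` I) \<subseteq> J" using R.genideal_minimal[OF J] by blast
    then show "\<exists>k\<in>{1..n}. ext_ideal A R psi I \<subseteq> ext_ideal A R psi (Is k)"
      using k unfolding ext_ideal_def J_def by blast
  qed
qed

end
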